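(* Let $b_j\in\{-1,1\}$, $a_j\in\mathbb{R}^n$ for $j\in[q]$, $K\in\{0,\ldots,n-1\}$, $\gamma>0$, and let $x^*$ be a d-stationary point of $$\min_{x\in\mathbb{R}^n}\ \sum_{j\in[q]}\log\big(1+\exp(-b_ja_j^\top x)\big)+\gamma T_{K,n,1}(x).$$ If $\gamma>\sum_{j\in[q]}\|a_j\|_\infty$, then $T_{K,n,1}(x^* )=0$, i.e., $x^*$ has at most $K$ nonzero entries.
   Context: $T_{K,n,1}(x)$ is the sum of the $n-K$ smallest values among $|x_1|,\ldots,|x_n|$. A point is d-stationary if the directional derivative of the objective there is $\ge0$ in every direction. *)

theory Defs
  imports "HOL-Analysis.Analysis" "HOL-Library.Multiset"
begin

definition trimmed_l1 :: "nat \<Rightarrow> real^'n \<Rightarrow> real" where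
  "trimmed_l1 K x = sum_list (take (CARD('n) - K)
      (sorted_list_of_multiset (image_mset (\<lambda>i. \<bar>x $ i\<bar>) (mset_set (UNIV :: 'n set)))))"

definition has_dir_deriv :: "(real^'n \<Rightarrow> real) \<Rightarrow> real^'n \<Rightarrow> real^'n \<Rightarrow> real \<Rightarrow> bool" where
  "has_dir_deriv f x d L \<longleftrightarrow> ((\<lambda>t. (f (x + t *\<^sub>R d) - f x) / t) \<longlongrightarrow> L) (at_right 0)"

definition d_stationary :: "(real^'n \<Rightarrow> real) \<Rightarrow> real^'n \<Rightarrow> bool" where
  "d_stationary f x \<longleftrightarrow> (\<forall>d. \<exists>L. has_dir_deriv f x d L \<and> L \<ge> 0)"

end

theory Submission
  imports Defs
begin

lemma ln_lip_aux:
  fixes u v :: real assumes "u \<le> v"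
  shows "ln (1 + exp v) - ln (1 + exp u) \<le> v - u \<and> 0 \<le> ln (1 + exp v) - ln (1 + exp u)"
proof -
  have e: "exp (v - u) * exp u = exp v" by (simp add: mult_exp_exp)
  have "1 \<le> exp (v - u)" using assms by simp
  hence "1 + exp v \<le> exp (v - u) * (1 + exp u)" using e by (simp add: algebra_simps)
  moreover have p: "0 < 1 + exp u" "0 < exp (v - u)" by (auto intro: add_pos_pos)
  ultimately have "ln (1 + exp v) \<le> ln (exp (v - u) * (1 + exp u))"
    by (subst ln_le_cancel_iff) (auto intro: add_pos_pos)
  also have "\<dots> = (v - u) + ln (1 + exp u)"
    by (subst ln_mult) (use p in auto)
  finally have 1: "ln (1 + exp v) - ln (1 + exp u) \<le> v - u" by simp
  have "ln (1 + exp u) \<le> ln (1 + exp v)"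
    using assms by (subst ln_le_cancel_iff) (auto intro: add_pos_pos)
  with 1 show ?thesis by simp
qed

lemma ln_lip: "\<bar>ln (1 + exp u) - ln (1 + exp v)\<bar> \<le> \<bar>u - v\<bar>" for u v :: real
proof (cases "u \<le> v")
  case True then show ?thesis using ln_lip_aux[of u v] by linarith
next
  case False then show ?thesis using ln_lip_aux[of v u] by linarith
qed

lemma sum_list_update_real:
  "k < length xs \<Longrightarrow> sum_list (xs[k := w]) = sum_list xs + w - xs!k" for xs :: "real list"
  by (induction xs arbitrary: k) (auto split: nat.split)

lemma sum_list_zero_real: "(\<forall>u\<in>set xs. u = 0) \<Longrightarrow> sum_list xs = (0::real)"
  by (induction xs) auto

lemma count_list_card: "count_list s x = card {k. k < length s \<and> s!k = x}"
  by (simp add: count_list_eq_length_filter length_filter_conv_card eq_commute)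

lemma count_zero_le:
  fixes s :: "real list"
  assumes "sorted s" "j < length s" "0 < s!j"
  shows "count_list s 0 \<le> j"
proof -
  have "{k. k < length s \<and> s!k = 0} \<subseteq> {..<j}"
  proof
    fix k assume k: "k \<in> {k. k < length s \<and> s!k = 0}"
    show "k \<in> {..<j}"
    proof (rule ccontr)
      assume "k \<notin> {..<j}"
      hence "j \<le> k" by simp
      hence "s!j \<le> s!k" using k sorted_nth_mono[OF assms(1) \<open>j \<le> k\<close>] by simp
      with k assms(3) show False by simp
    qed
  qed
  hence "card {k. k < length s \<and> s!k = 0} \<le> card {..<j}" by (intro card_mono) auto
  thus ?thesis by (simp add: count_list_card)
qed

lemma count_zero_eq:
  fixes s :: "real list"
  assumes "z \<le> length s" "\<forall>k<z. s!k = 0" "\<forall>k. z \<le> k \<and> k < length s \<longrightarrow> 0 < s!k"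
  shows "count_list s 0 = z"
proof -
  have "{k. k < length s \<and> s!k = 0} = {..<z}"
    using assms by (auto; metis less_irrefl not_le)
  thus ?thesis by (simp add: count_list_card)
qed

lemma sorted_update_mid:
  fixes s :: "real list"
  assumes "sorted s" "z < length s" "\<forall>k<z. s!k \<le> w" "w \<le> s!z"
  shows "sorted (s[z := w])"
proof -
  have "s[z:=w] ! i \<le> s[z:=w] ! j" if "i \<le> j" "j < length s" for i j
  proof -
    have m: "s!i \<le> s!j" using that assms(1) by (simp add: sorted_nth_mono)
    show ?thesis
    proof (cases "i = z")
      case True
      then show ?thesis using that assms m
        by (cases "j = z") (auto simp: nth_list_update intro: order_trans[OF _ sorted_nth_mono[OF assms(1)]])
    next
      case False
      then show ?thesis using that assms m
        by (cases "j = z") (auto simp: nth_list_update)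
    qed
  qed
  thus ?thesis by (simp add: sorted_iff_nth_mono)
qed

lemma count_img:
  "count (image_mset g (mset_set (UNIV::'n::finite set))) (0::real) = card {k. g k = 0}"
  by (simp add: count_image_mset vimage_def)

theorem mainTheorem8:
  fixes a :: "nat \<Rightarrow> real^'n" and b :: "nat \<Rightarrow> real" and q K :: nat
    and \<gamma> :: real and xs :: "real^'n"
  assumes "\<forall>j\<in>{1..q}. b j \<in> {-1, 1}"
    and "K < CARD('n)"
    and "\<gamma> > 0"
    and "d_stationary (\<lambda>x. (\<Sum>j\<in>{1..q}. ln (1 + exp (- b j * (a j \<bullet> x)))) + \<gamma> * trimmed_l1 K x) xs"
    and "\<gamma> > (\<Sum>j\<in>{1..q}. infnorm (a j))"
  shows "trimmed_l1 K xs = 0 \<and> card {i. xs $ i \<noteq> 0} \<le> K"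
proof -
  define n where "n = CARD('n)"
  define m where "m = n - K"
  define L where "L = (\<lambda>x. (\<Sum>j\<in>{1..q}. ln (1 + exp (- b j * (a j \<bullet> x)))))"
  define F where "F = (\<lambda>x. (\<Sum>j\<in>{1..q}. ln (1 + exp (- b j * (a j \<bullet> x)))) + \<gamma> * trimmed_l1 K x)"
  define S where "S = (\<Sum>j\<in>{1..q}. infnorm (a j))"
  have dst: "d_stationary F xs" using assms(4) unfolding F_def .
  define Ms where "Ms = (\<lambda>x::real^'n. image_mset (\<lambda>i. \<bar>x$i\<bar>) (mset_set (UNIV::'n set)))"
  have T_eq: "trimmed_l1 K x = sum_list (take m (sorted_list_of_multiset (Ms x)))" for x
    unfolding trimmed_l1_def Ms_def m_def n_def ..
  define s where "s = sorted_list_of_multiset (Ms xs)"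
  have s_sorted: "sorted s" unfolding s_def by simp
  have s_mset: "mset s = Ms xs" unfolding s_def by simp
  have s_len: "length s = n"
    by (metis s_mset size_mset Ms_def size_image_mset size_mset_set n_def)
  have s_nonneg: "\<forall>u\<in>set s. 0 \<le> u"
  proof
    fix u assume "u \<in> set s"
    hence "u \<in># Ms xs" using s_mset by (metis set_mset_mset)
    thus "0 \<le> u" unfolding Ms_def by auto
  qed
  have cardsplit: "card {k. xs$k = 0} + card {k. xs$k \<noteq> 0} = n"
  proof -
    have "card ({k. xs$k = 0} \<union> {k. xs$k \<noteq> 0}) = card {k. xs$k = 0} + card {k. xs$k \<noteq> 0}"
      by (rule card_Un_disjoint) auto
    moreover have "{k. xs$k = 0} \<union> {k. xs$k \<noteq> 0} = UNIV" by auto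
    ultimately show ?thesis by (simp add: n_def)
  qed
  have cnt: "count_list s 0 = n - card {k. xs$k \<noteq> 0}"
  proof -
    have "count_list s 0 = count (Ms xs) 0" by (metis count_mset s_mset)
    also have "\<dots> = card {k. \<bar>xs$k\<bar> = 0}" unfolding Ms_def by (rule count_img)
    also have "\<dots> = card {k. xs$k = 0}" by simp
    finally show ?thesis using cardsplit by simp
  qed
  have cardle: "card {k. xs$k \<noteq> 0} \<le> n" using cardsplit by simp
  have nzK: "card {k. xs$k \<noteq> 0} \<le> K"
  proof (rule ccontr)
    assume "\<not> ?thesis"
    hence clt: "count_list s 0 < m" using cnt assms(2) cardle unfolding m_def n_def by simp
    have ex: "\<exists>j. j < length s \<and> 0 < s!j"
    proof (rule ccontr)
      assume not: "\<not> ?thesis"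
      have "\<forall>k<length s. s!k = 0"
        using not s_nonneg by (metis nth_mem order_le_less)
      hence "count_list s 0 = length s" using count_zero_eq[of "length s" s] by simp
      thus False using clt s_len unfolding m_def by simp
    qed
    define z where "z = (LEAST j. j < length s \<and> 0 < s!j)"
    have z: "z < length s" "0 < s!z" using LeastI_ex[OF ex] unfolding z_def by auto
    have below: "\<forall>k<z. s!k = 0"
    proof (intro allI impI)
      fix k assume "k < z"
      hence "\<not> (k < length s \<and> 0 < s!k)" using not_less_Least unfolding z_def by blast
      moreover have "k < length s" using \<open>k < z\<close> z by simp
      ultimately show "s!k = 0" using s_nonneg by (metis nth_mem order_le_less)
    qed
    have above: "\<forall>k. z \<le> k \<and> k < length s \<longrightarrow> 0 < s!k"
      using z s_sorted by (metis order_less_le_trans sorted_nth_mono)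
    have "count_list s 0 = z" using count_zero_eq[of z s] below above z by simp
    hence zm: "z < m" using clt by simp
    define v where "v = s!z"
    have vpos: "0 < v" using z v_def by simp
    have "v \<in># Ms xs" using z s_mset v_def by (metis nth_mem set_mset_mset)
    then obtain i where i: "\<bar>xs$i\<bar> = v" unfolding Ms_def by auto
    have xi0: "xs$i \<noteq> 0" using i vpos by auto
    define d where "d = (- sgn (xs$i)) *\<^sub>R axis i (1::real)"
    have Tdec: "trimmed_l1 K (xs + t *\<^sub>R d) = trimmed_l1 K xs - t" if t: "0 < t" "t < v" for t
    proof -
      let ?y = "xs + t *\<^sub>R d"
      have yk: "?y $ k = (if k = i then xs$i - t * sgn (xs$i) else xs$k)" for k
        by (simp add: d_def axis_def)
      have yi: "\<bar>?y$i\<bar> = v - t"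
        using i t yk[of i] by (cases "xs$i > 0") (auto simp: sgn_if)
      define R where "R = image_mset (\<lambda>k. \<bar>xs$k\<bar>) (mset_set (UNIV - {i}))"
      have decomp: "mset_set (UNIV::'n set) = add_mset i (mset_set (UNIV - {i}))"
        by (rule mset_set.remove) auto
      have Mx: "Ms xs = add_mset v R" unfolding Ms_def R_def decomp using i by simp
      have "Ms ?y = add_mset (v - t) (image_mset (\<lambda>k. \<bar>?y$k\<bar>) (mset_set (UNIV - {i})))"
        unfolding Ms_def decomp using yi by simp
      also have "image_mset (\<lambda>k. \<bar>?y$k\<bar>) (mset_set (UNIV - {i})) = R"
        unfolding R_def by (rule image_mset_cong) (simp add: d_def axis_def)
      finally have "Ms ?y = add_mset (v - t) (Ms xs - {#v#})" using Mx by simp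
      also have "\<dots> = mset (s[z := v - t])" using mset_update[OF z(1)] s_mset v_def by simp
      finally have My: "Ms ?y = mset (s[z := v - t])" .
      have srt: "sorted (s[z := v - t])"
        using sorted_update_mid[OF s_sorted z(1)] below t v_def by simp
      have "sorted_list_of_multiset (Ms ?y) = s[z := v - t]"
        using My srt by (simp add: sorted_sort_id)
      hence "trimmed_l1 K ?y = sum_list ((take m s)[z := v - t])"
        using T_eq by (simp add: take_update_swap)
      also have "\<dots> = sum_list (take m s) + (v - t) - (take m s)!z"
        using zm z by (intro sum_list_update_real) simp
      also have "(take m s)!z = v" using zm v_def by simp
      finally show ?thesis using T_eq s_def by simp
    qed
    have Lb: "L (xs + t *\<^sub>R d) - L xs \<le> t * S" if t: "0 < t" for t
    proof -
      have "L (xs + t *\<^sub>R d) - L xs = (\<Sum>j\<in>{1..q}. ln (1 + exp (- b j * (a j \<bullet> (xs + t *\<^sub>R d)))) - ln (1 + exp (- b j * (a j \<bullet> xs))))"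
        unfolding L_def by (simp add: sum_subtractf)
      also have "\<dots> \<le> (\<Sum>j\<in>{1..q}. t * infnorm (a j))"
      proof (rule sum_mono)
        fix j assume j: "j \<in> {1..q}"
        have "b j = -1 \<or> b j = 1" using assms(1) j by auto
        hence bj: "\<bar>b j\<bar> = 1" by auto
        have ad: "a j \<bullet> d = - sgn (xs$i) * (a j $ i)" by (simp add: d_def inner_axis)
        have "\<bar>(- b j * (a j \<bullet> (xs + t *\<^sub>R d))) - (- b j * (a j \<bullet> xs))\<bar> = \<bar>b j\<bar> * t * \<bar>a j \<bullet> d\<bar>"
          using t by (simp add: inner_add_right algebra_simps abs_mult)
        also have "\<dots> = t * \<bar>a j $ i\<bar>" using bj xi0 by (simp add: ad abs_mult abs_sgn_eq)
        also have "\<dots> \<le> t * infnorm (a j)" using t by (simp add: component_le_infnorm_cart)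
        finally show "ln (1 + exp (- b j * (a j \<bullet> (xs + t *\<^sub>R d)))) - ln (1 + exp (- b j * (a j \<bullet> xs))) \<le> t * infnorm (a j)"
          using ln_lip[of "- b j * (a j \<bullet> (xs + t *\<^sub>R d))" "- b j * (a j \<bullet> xs)"] by linarith
      qed
      also have "\<dots> = t * S" unfolding S_def by (simp add: sum_distrib_left)
      finally show ?thesis .
    qed
    have q: "(F (xs + t *\<^sub>R d) - F xs) / t \<le> S - \<gamma>" if t: "0 < t" "t < v" for t
    proof -
      have "F (xs + t *\<^sub>R d) - F xs = (L (xs + t *\<^sub>R d) - L xs) - \<gamma> * t"
        unfolding F_def L_def Tdec[OF t] by (simp add: algebra_simps)
      also have "\<dots> \<le> t * S - \<gamma> * t" using Lb[OF t(1)] by simp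
      finally have "F (xs + t *\<^sub>R d) - F xs \<le> t * (S - \<gamma>)" by (simp add: algebra_simps)
      thus ?thesis using t by (simp add: pos_divide_le_eq mult.commute)
    qed
    obtain Lim where Lim: "has_dir_deriv F xs d Lim" "Lim \<ge> 0" using dst unfolding d_stationary_def by blast
    have ev: "eventually (\<lambda>t. (F (xs + t *\<^sub>R d) - F xs) / t \<le> S - \<gamma>) (at_right 0)"
      using eventually_at_right_real[OF vpos] by eventually_elim (auto intro: q)
    have "Lim \<le> S - \<gamma>"
      using Lim(1) unfolding has_dir_deriv_def by (rule tendsto_upperbound[OF _ ev]) simp
    thus False using Lim(2) assms(5) S_def by simp
  qed
  have "\<forall>u\<in>set (take m s). u = 0"
  proof
    fix u assume "u \<in> set (take m s)"
    then obtain j where j: "j < length (take m s)" "u = (take m s)!j" by (metis in_set_conv_nth)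
    hence jm: "j < m" "j < length s" by auto
    have uj: "u = s!j" using j jm by simp
    show "u = 0"
    proof (rule ccontr)
      assume "u \<noteq> 0"
      hence "0 < s!j" using uj s_nonneg jm by (metis nth_mem order_le_less)
      hence "count_list s 0 \<le> j" using count_zero_le s_sorted jm by blast
      thus False using cnt nzK jm unfolding m_def by simp
    qed
  qed
  hence "trimmed_l1 K xs = 0" using T_eq s_def sum_list_zero_real by simp
  with nzK show ?thesis by simp
qed

end
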